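(* Let $\mu$ be a joint distribution of a triple $(X,A,Y)$ with $X\in\mathcal{X}\subseteq\mathbb{R}^d$, $A\in\{0,1\}$ with $\Pr(A=0),\Pr(A=1)>0$, and $Y\in[-1,1]$. Let $p\ge1$ and for $i\in\{0,1\}$ assume the infimum $\varepsilon^*_{p,\mu_i}:=\inf_f\varepsilon_{p,\mu_i}(f(X))$ over measurable $f$ is attained by some $f_i^*$. Let $h:\mathcal{X}\to\mathbb{R}$ be measurable, $\widehat{Y}=h(X)$, and suppose there is $\epsilon>0$ with $W_p(h_\sharp\mu_0,h_\sharp\mu_1)\leq\epsilon$. Then $$r_{p,\mu_0}(\widehat{Y})+r_{p,\mu_1}(\widehat{Y})\geq W_p({f_0^*}_\sharp\mu_0,{f_1^*}_\sharp\mu_1)-2(\varepsilon^*_{p,\mu_0}+\varepsilon^*_{p,\mu_1})-\epsilon,$$ and, provided the densities (w.r.t. Lebesgue measure) of $h_\sharp\mu_0,h_\sharp\mu_1$ are bounded above by a constant $C$, $\widehat{Y}$ satisfies $2\sqrt{C\epsilon}$-statistical parity, i.e. $\sup_{z\in\mathbb{R}}|\Pr_{\mu_0}(h(X)\le z)-\Pr_{\mu_1}(h(X)\le z)|\le2\sqrt{C\epsilon}$.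
   Context: For $a\in\{0,1\}$, $\mu_a$ is the conditional distribution of $(X,Y)$ given $A=a$. For a distribution $\nu$, $\varepsilon_{p,\nu}(\widehat{Y}):=\left(\mathbb{E}_\nu[|\widehat{Y}-Y|^p]\right)^{1/p}$, and the excess risk is $r_{p,\nu}(\widehat{Y}):=\varepsilon_{p,\nu}(\widehat{Y})-\varepsilon^*_{p,\nu}$. For a map $g$, $g_\sharp\nu$ is the pushforward distribution (distribution of $g(X)$ under $\nu$). $W_p$ is the $p$-Wasserstein distance on $\mathbb{R}$. *)

theory Defs
  imports "HOL-Probability.Probability"
begin

text \<open>Outcomes are triples (X, A, Y) with X in real^'d, A :: bool (False = group 0,
  True = group 1), Y real.\<close>

type_synonym 'd outcome = "(real^'d) \<times> bool \<times> real"

definition sample_space :: "'d::finite outcome measure" where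
  "sample_space = borel \<Otimes>\<^sub>M count_space UNIV \<Otimes>\<^sub>M borel"

definition cond_dist :: "'d::finite outcome measure \<Rightarrow> bool \<Rightarrow> 'd outcome measure" where
  "cond_dist \<mu> a = uniform_measure \<mu> {\<omega> \<in> space \<mu>. fst (snd \<omega>) = a}"

definition enn_root :: "real \<Rightarrow> ennreal \<Rightarrow> ennreal" where
  "enn_root p e = (if e = \<infinity> then \<infinity> else ennreal (enn2real e powr (1 / p)))"

definition lp_error :: "real \<Rightarrow> 'd::finite outcome measure \<Rightarrow> (real^'d \<Rightarrow> real) \<Rightarrow> ennreal" where
  "lp_error p \<nu> f = enn_root p (\<integral>\<^sup>+ \<omega>. ennreal (\<bar>f (fst \<omega>) - snd (snd \<omega>)\<bar> powr p) \<partial>\<nu>)"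

definition opt_lp_error :: "real \<Rightarrow> 'd::finite outcome measure \<Rightarrow> ennreal" where
  "opt_lp_error p \<nu> = (INF f \<in> borel_measurable borel. lp_error p \<nu> f)"

definition excess_risk :: "real \<Rightarrow> 'd::finite outcome measure \<Rightarrow> (real^'d \<Rightarrow> real) \<Rightarrow> ereal" where
  "excess_risk p \<nu> f = enn2ereal (lp_error p \<nu> f) - enn2ereal (opt_lp_error p \<nu>)"

definition push :: "'d::finite outcome measure \<Rightarrow> (real^'d \<Rightarrow> real) \<Rightarrow> real measure" where
  "push \<nu> g = distr \<nu> borel (\<lambda>\<omega>. g (fst \<omega>))"

definition couplings :: "real measure \<Rightarrow> real measure \<Rightarrow> (real \<times> real) measure set" where
  "couplings \<nu>1 \<nu>2 = {\<pi>. prob_space \<pi> \<and> sets \<pi> = sets (borel :: (real \<times> real) measure)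
      \<and> distr \<pi> borel fst = \<nu>1 \<and> distr \<pi> borel snd = \<nu>2}"

definition wasserstein :: "real \<Rightarrow> real measure \<Rightarrow> real measure \<Rightarrow> ennreal" where
  "wasserstein p \<nu>1 \<nu>2 = (INF \<pi> \<in> couplings \<nu>1 \<nu>2.
      enn_root p (\<integral>\<^sup>+ z. ennreal (\<bar>fst z - snd z\<bar> powr p) \<partial>\<pi>))"

end

theory Submission
  imports Defs
begin

lemma enn_root_mono:
  assumes "p > 0" "a \<le> b"
  shows "enn_root p a \<le> enn_root p b"
proof (cases "b = \<infinity>")
  case True then show ?thesis by (simp add: enn_root_def)
next
  case False
  then have "a \<noteq> \<infinity>" using assms(2) by (auto simp: top_unique)
  then show ?thesis using False assms
    by (auto simp: enn_root_def top.not_eq_extremum intro!: ennreal_leI powr_mono2 enn2real_mono)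
qed

lemma enn_root_powr:
  assumes "p > 0" "x \<ge> 0"
  shows "enn_root p (ennreal (x powr p)) = ennreal x"
  using assms by (simp add: enn_root_def powr_powr)

lemma REP:
  fixes X Y :: "'a \<Rightarrow> real"
  assumes "sigma_finite_measure M" "X \<in> borel_measurable M" "Y \<in> borel_measurable M"
  shows "(\<integral>\<^sup>+\<omega>. ennreal (max 0 (X \<omega> - Y \<omega> - a)) \<partial>M)
       = (\<integral>\<^sup>+s. emeasure M {\<omega>\<in>space M. Y \<omega> \<le> s \<and> s + a < X \<omega>} \<partial>lborel)"
proof -
  note [measurable] = assms(2,3)
  interpret pair_sigma_finite M lborel
    using assms(1) by (simp add: pair_sigma_finite_def lborel.sigma_finite_measure_axioms)
  have eq: "ennreal (max 0 (X \<omega> - Y \<omega> - a)) = (\<integral>\<^sup>+s. indicator {Y \<omega> ..< X \<omega> - a} s \<partial>lborel)" for \<omega>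
    by (cases "Y \<omega> \<le> X \<omega> - a") auto
  have meas: "(\<lambda>(\<omega>, s). indicator {Y \<omega> ..< X \<omega> - a} s :: ennreal) \<in> borel_measurable (M \<Otimes>\<^sub>M lborel)"
    using assms(2,3) unfolding indicator_def atLeastLessThan_iff mem_Collect_eq by measurable
  have "(\<integral>\<^sup>+\<omega>. ennreal (max 0 (X \<omega> - Y \<omega> - a)) \<partial>M)
      = (\<integral>\<^sup>+\<omega>. \<integral>\<^sup>+s. indicator {Y \<omega> ..< X \<omega> - a} s \<partial>lborel \<partial>M)"
    by (intro nn_integral_cong) (rule eq)
  also have "\<dots> = (\<integral>\<^sup>+s. \<integral>\<^sup>+\<omega>. indicator {Y \<omega> ..< X \<omega> - a} s \<partial>M \<partial>lborel)"
    using Fubini'[OF meas] by simp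
  also have "\<dots> = (\<integral>\<^sup>+s. emeasure M {\<omega>\<in>space M. Y \<omega> \<le> s \<and> s + a < X \<omega>} \<partial>lborel)"
  proof (rule nn_integral_cong)
    fix s
    have "(\<integral>\<^sup>+\<omega>. indicator {Y \<omega> ..< X \<omega> - a} s \<partial>M)
        = (\<integral>\<^sup>+\<omega>. indicator {\<omega>\<in>space M. Y \<omega> \<le> s \<and> s + a < X \<omega>} \<omega> \<partial>M)"
      by (intro nn_integral_cong) (auto simp: indicator_def)
    also have "\<dots> = emeasure M {\<omega>\<in>space M. Y \<omega> \<le> s \<and> s + a < X \<omega>}"
      by (intro nn_integral_indicator) measurable
    finally show "(\<integral>\<^sup>+\<omega>. indicator {Y \<omega> ..< X \<omega> - a} s \<partial>M)
        = emeasure M {\<omega>\<in>space M. Y \<omega> \<le> s \<and> s + a < X \<omega>}" .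
  qed
  finally show ?thesis .
qed

definition Q :: "real measure \<Rightarrow> real \<Rightarrow> real" where
  "Q N \<omega> = Inf {x. \<omega> \<le> cdf N x}"

abbreviation UI :: "real measure" where
  "UI \<equiv> restrict_space lborel {0<..<1::real}"

lemma prob_UI: "prob_space UI"
  by (auto simp add: emeasure_restrict_space space_restrict_space intro!: prob_spaceI)

lemma sets_UI: "sets UI = sets (restrict_space borel {0<..<1::real})"
  by (simp add: sets_restrict_space)

lemma Q_pseudo:
  assumes "real_distribution N" "0 < \<omega>" "\<omega> < 1"
  shows "\<omega> \<le> cdf N x \<longleftrightarrow> Q N \<omega> \<le> x"
proof -
  interpret cdf_distribution N using assms(1) by (simp add: cdf_distribution_def)
  show ?thesis unfolding Q_def by (rule pseudoinverse[OF assms(2,3)])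
qed

lemma Q_meas [measurable]:
  assumes "real_distribution N"
  shows "Q N \<in> borel_measurable UI"
proof -
  interpret cdf_distribution N using assms(1) by (simp add: cdf_distribution_def)
  have "(\<lambda>\<omega>. Inf {x. \<omega> \<le> cdf N x}) \<in> borel_measurable (restrict_space borel {0<..<1})"
    by (rule measurable_CI)
  then show ?thesis
    by (subst measurable_cong_sets[OF sets_UI refl]) (simp add: Q_def[abs_def])
qed

lemma Q_distr:
  assumes "real_distribution N"
  shows "distr UI borel (Q N) = N"
proof -
  interpret cdf_distribution N using assms(1) by (simp add: cdf_distribution_def)
  show ?thesis unfolding Q_def[abs_def] by (rule distr_I_eq_M)
qed

lemma real_distribution_distr:
  assumes "prob_space M" "X \<in> borel_measurable M"
  shows "real_distribution (distr M borel X)"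
  using assms by (simp add: real_distribution_def real_distribution_axioms_def prob_space.prob_space_distr)

lemma cdf_distr_eq:
  assumes "prob_space M" "X \<in> borel_measurable M"
  shows "cdf (distr M borel X) x = measure M {\<omega>\<in>space M. X \<omega> \<le> x}"
  using assms by (simp add: cdf_def measure_distr vimage_def Int_def conj_commute)

lemma K:
  fixes X Y :: "'a \<Rightarrow> real"
  assumes M: "prob_space M" and [measurable]: "X \<in> borel_measurable M" "Y \<in> borel_measurable M"
  shows "(\<integral>\<^sup>+\<omega>. ennreal (max 0 (Q (distr M borel X) \<omega> - Q (distr M borel Y) \<omega> - a)) \<partial>UI)
       \<le> (\<integral>\<^sup>+\<omega>. ennreal (max 0 (X \<omega> - Y \<omega> - a)) \<partial>M)"
proof -
  define \<alpha> where "\<alpha> = distr M borel X"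
  define \<beta> where "\<beta> = distr M borel Y"
  have ra: "real_distribution \<alpha>" and rb: "real_distribution \<beta>"
    using real_distribution_distr[OF M] by (auto simp: \<alpha>_def \<beta>_def)
  interpret M: prob_space M by (rule M)
  interpret U: prob_space UI by (rule prob_UI)
  have [measurable]: "Q \<alpha> \<in> borel_measurable UI" "Q \<beta> \<in> borel_measurable UI"
    using ra rb by (auto intro: Q_meas)
  have "(\<integral>\<^sup>+\<omega>. ennreal (max 0 (Q \<alpha> \<omega> - Q \<beta> \<omega> - a)) \<partial>UI)
      = (\<integral>\<^sup>+s. emeasure UI {\<omega>\<in>space UI. Q \<beta> \<omega> \<le> s \<and> s + a < Q \<alpha> \<omega>} \<partial>lborel)"
    by (rule REP) (auto simp: U.sigma_finite_measure_axioms)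
  also have "\<dots> \<le> (\<integral>\<^sup>+s. emeasure M {\<omega>\<in>space M. Y \<omega> \<le> s \<and> s + a < X \<omega>} \<partial>lborel)"
  proof (rule nn_integral_mono)
    fix s
    let ?G = "cdf \<beta> s" and ?F = "cdf \<alpha> (s + a)"
    have "{\<omega>\<in>space UI. Q \<beta> \<omega> \<le> s \<and> s + a < Q \<alpha> \<omega>} = {\<omega>\<in>{0<..<1}. \<omega> \<le> ?G \<and> \<not> \<omega> \<le> ?F}"
      using Q_pseudo[OF ra, of _ "s + a"] Q_pseudo[OF rb, of _ s]
      by (auto simp: space_restrict_space)
    also have "\<dots> \<subseteq> {?F<..?G}" by auto
    finally have sub: "{\<omega>\<in>space UI. Q \<beta> \<omega> \<le> s \<and> s + a < Q \<alpha> \<omega>} \<subseteq> {?F<..?G}" .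
    have "emeasure UI {\<omega>\<in>space UI. Q \<beta> \<omega> \<le> s \<and> s + a < Q \<alpha> \<omega>}
        \<le> emeasure lborel {\<omega>\<in>space UI. Q \<beta> \<omega> \<le> s \<and> s + a < Q \<alpha> \<omega>}"
      by (subst emeasure_restrict_space) (auto simp: space_restrict_space intro!: emeasure_mono)
    also have "\<dots> \<le> emeasure lborel {?F<..?G}"
      by (intro emeasure_mono sub) auto
    also have "\<dots> = ennreal (max 0 (?G - ?F))"
      by (cases "?F \<le> ?G") auto
    also have "\<dots> \<le> emeasure M {\<omega>\<in>space M. Y \<omega> \<le> s \<and> s + a < X \<omega>}"
    proof -
      have "measure M {\<omega>\<in>space M. Y \<omega> \<le> s} \<le> measure M ({\<omega>\<in>space M. Y \<omega> \<le> s \<and> s + a < X \<omega>} \<union> {\<omega>\<in>space M. X \<omega> \<le> s + a})"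
        by (intro M.finite_measure_mono) auto
      also have "\<dots> \<le> measure M {\<omega>\<in>space M. Y \<omega> \<le> s \<and> s + a < X \<omega>} + measure M {\<omega>\<in>space M. X \<omega> \<le> s + a}"
        by (intro measure_Un_le) auto
      finally have "?G - ?F \<le> measure M {\<omega>\<in>space M. Y \<omega> \<le> s \<and> s + a < X \<omega>}"
        using cdf_distr_eq[OF M] by (simp add: \<alpha>_def \<beta>_def)
      then show ?thesis
        by (simp add: M.emeasure_eq_measure)
    qed
    finally show "emeasure UI {\<omega>\<in>space UI. Q \<beta> \<omega> \<le> s \<and> s + a < Q \<alpha> \<omega>}
        \<le> emeasure M {\<omega>\<in>space M. Y \<omega> \<le> s \<and> s + a < X \<omega>}" .
  qed
  also have "\<dots> = (\<integral>\<^sup>+\<omega>. ennreal (max 0 (X \<omega> - Y \<omega> - a)) \<partial>M)"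
    by (rule REP[symmetric]) (auto simp: M.sigma_finite_measure_axioms)
  finally show ?thesis by (simp add: \<alpha>_def \<beta>_def)
qed


lemma POW:
  fixes p R :: real
  assumes p: "p > 1" and R: "R \<ge> 0"
  shows "(\<integral>\<^sup>+a. ennreal (indicator {0..R} a * (p*(p-1) * a powr (p-2) * (R - a))) \<partial>lborel) = ennreal (R powr p)"
proof -
  define F where "F a = p*R*a powr (p-1) - (p-1)*a powr p" for a
  define f where "f a = p*(p-1) * a powr (p-2) * (R - a)" for a
  have cont: "continuous_on {0..R} F" unfolding F_def using p
    by (intro continuous_intros continuous_on_powr') auto
  have der: "(F has_vector_derivative f a) (at a)" if "a \<in> {0<..<R}" for a
  proof -
    have a: "a > 0" using that by auto
    have "(F has_real_derivative p*R*((p-1)*a powr (p-1-1)) - (p-1)*(p*a powr (p-1))) (at a)"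
      unfolding F_def
      by (intro DERIV_diff DERIV_cmult has_real_derivative_powr a)
    moreover have "p*R*((p-1)*a powr (p-1-1)) - (p-1)*(p*a powr (p-1)) = f a"
    proof -
      have "a powr (p-1) = a powr (p-2) * a"
        using a powr_add[of a "p-2" 1] by simp
      then show ?thesis unfolding f_def by (simp add: algebra_simps)
    qed
    ultimately show ?thesis by (simp add: has_real_derivative_iff_has_vector_derivative)
  qed
  have "(f has_integral F R - F 0) {0..R}"
    by (rule fundamental_theorem_of_calculus_interior[OF R cont der])
  moreover have "F R - F 0 = R powr p"
  proof (cases "R = 0")
    case True then show ?thesis using p by (simp add: F_def)
  next
    case False
    then have "R > 0" using R by simp
    then have "R * R powr (p-1) = R powr p"
      using powr_add[of R 1 "p-1"] by simp
    then show ?thesis using p by (simp add: F_def algebra_simps)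
  qed
  ultimately have "(f has_integral R powr p) {0..R}" by simp
  then have I: "((\<lambda>a. indicator {0..R} a * f a) has_integral R powr p) UNIV"
  proof -
    have "(\<lambda>a. indicator {0..R} a * f a) = (\<lambda>a. if a \<in> {0..R} then f a else 0)"
      by (auto simp: indicator_def fun_eq_iff)
    then show ?thesis using has_integral_restrict_UNIV[of "{0..R}" f] \<open>(f has_integral R powr p) {0..R}\<close>
      by simp
  qed
  have "(\<integral>\<^sup>+a. ennreal (indicator {0..R} a * f a) \<partial>lborel) = ennreal (R powr p)"
    by (rule nn_integral_has_integral_lborel[OF _ _ I])
       (use p in \<open>auto simp: f_def indicator_def intro!: mult_nonneg_nonneg\<close>)
  then show ?thesis by (simp add: f_def)
qed


definition wgt :: "real \<Rightarrow> real \<Rightarrow> real" where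
  "wgt p a = (if 0 < a then p*(p-1) * a powr (p-2) else 0)"

lemma wgt_nonneg: "p \<ge> 1 \<Longrightarrow> wgt p a \<ge> 0"
  by (simp add: wgt_def)

lemma wgt_meas [measurable]: "wgt p \<in> borel_measurable borel"
  unfolding wgt_def[abs_def] by measurable

lemma DEC:
  fixes p x y :: real
  assumes p: "p > 1"
  shows "ennreal (\<bar>x - y\<bar> powr p)
    = (\<integral>\<^sup>+a. ennreal (wgt p a) * (ennreal (max 0 (x - y - a)) + ennreal (max 0 (y - x - a))) \<partial>lborel)"
proof -
  have "(\<integral>\<^sup>+a. ennreal (wgt p a) * (ennreal (max 0 (x - y - a)) + ennreal (max 0 (y - x - a))) \<partial>lborel)
      = (\<integral>\<^sup>+a. ennreal (indicator {0..\<bar>x - y\<bar>} a * (p*(p-1) * a powr (p-2) * (\<bar>x - y\<bar> - a))) \<partial>lborel)"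
  proof (intro nn_integral_cong)
    fix a :: real
    show "ennreal (wgt p a) * (ennreal (max 0 (x - y - a)) + ennreal (max 0 (y - x - a)))
      = ennreal (indicator {0..\<bar>x - y\<bar>} a * (p*(p-1) * a powr (p-2) * (\<bar>x - y\<bar> - a)))"
    proof (cases "a > 0")
      case False
      then show ?thesis by (auto simp: wgt_def indicator_def)
    next
      case True
      have w: "wgt p a \<ge> 0" using p by (simp add: wgt_def)
      have "ennreal (max 0 (x - y - a)) + ennreal (max 0 (y - x - a)) = ennreal (max 0 (\<bar>x - y\<bar> - a))"
        using True by (auto simp: max_def abs_if ennreal_plus[symmetric] simp del: ennreal_plus)
      moreover have "wgt p a * max 0 (\<bar>x - y\<bar> - a) = indicator {0..\<bar>x - y\<bar>} a * (p*(p-1) * a powr (p-2) * (\<bar>x - y\<bar> - a))"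
        using True by (auto simp: wgt_def indicator_def max_def)
      moreover have "ennreal (wgt p a) * ennreal (max 0 (\<bar>x - y\<bar> - a)) = ennreal (wgt p a * max 0 (\<bar>x - y\<bar> - a))"
        by (rule ennreal_mult[symmetric]) (auto simp: w)
      ultimately show ?thesis
        by metis
    qed
  qed
  also have "\<dots> = ennreal (\<bar>x - y\<bar> powr p)"
    by (rule POW[OF p]) simp
  finally show ?thesis by simp
qed

lemma CORE:
  fixes X Y :: "'a \<Rightarrow> real"
  assumes M: "prob_space M" and [measurable]: "X \<in> borel_measurable M" "Y \<in> borel_measurable M"
    and p: "p \<ge> 1"
  shows "(\<integral>\<^sup>+\<omega>. ennreal (\<bar>Q (distr M borel X) \<omega> - Q (distr M borel Y) \<omega>\<bar> powr p) \<partial>UI)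
       \<le> (\<integral>\<^sup>+\<omega>. ennreal (\<bar>X \<omega> - Y \<omega>\<bar> powr p) \<partial>M)"
proof -
  define \<alpha> where "\<alpha> = distr M borel X"
  define \<beta> where "\<beta> = distr M borel Y"
  have ra: "real_distribution \<alpha>" and rb: "real_distribution \<beta>"
    using real_distribution_distr[OF M] by (auto simp: \<alpha>_def \<beta>_def)
  interpret M: prob_space M by (rule M)
  interpret U: prob_space UI by (rule prob_UI)
  have [measurable]: "Q \<alpha> \<in> borel_measurable UI" "Q \<beta> \<in> borel_measurable UI"
    using ra rb by (auto intro: Q_meas)
  have K1: "(\<integral>\<^sup>+\<omega>. ennreal (max 0 (Q \<alpha> \<omega> - Q \<beta> \<omega> - a)) \<partial>UI) \<le> (\<integral>\<^sup>+\<omega>. ennreal (max 0 (X \<omega> - Y \<omega> - a)) \<partial>M)" for a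
    using K[OF M, of X Y a] by (simp add: \<alpha>_def \<beta>_def)
  have K2: "(\<integral>\<^sup>+\<omega>. ennreal (max 0 (Q \<beta> \<omega> - Q \<alpha> \<omega> - a)) \<partial>UI) \<le> (\<integral>\<^sup>+\<omega>. ennreal (max 0 (Y \<omega> - X \<omega> - a)) \<partial>M)" for a
    using K[OF M, of Y X a] by (simp add: \<alpha>_def \<beta>_def)
  have KK: "(\<integral>\<^sup>+\<omega>. ennreal (max 0 (Q \<alpha> \<omega> - Q \<beta> \<omega> - a)) + ennreal (max 0 (Q \<beta> \<omega> - Q \<alpha> \<omega> - a)) \<partial>UI)
     \<le> (\<integral>\<^sup>+\<omega>. ennreal (max 0 (X \<omega> - Y \<omega> - a)) + ennreal (max 0 (Y \<omega> - X \<omega> - a)) \<partial>M)" for a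
    using add_mono[OF K1 K2] by (simp add: nn_integral_add)
  show ?thesis
  proof (cases "p = 1")
    case True
    have e: "ennreal (\<bar>u - v\<bar> powr p) = ennreal (max 0 (u - v - 0)) + ennreal (max 0 (v - u - 0))" for u v :: real
      using True by (auto simp: max_def abs_if ennreal_plus[symmetric] simp del: ennreal_plus)
    show ?thesis unfolding e using KK[of 0] by (simp add: \<alpha>_def \<beta>_def)
  next
    case False
    then have p1: "p > 1" using p by simp
    interpret UL: pair_sigma_finite UI lborel
      by (simp add: pair_sigma_finite_def lborel.sigma_finite_measure_axioms U.sigma_finite_measure_axioms)
    interpret PM: pair_sigma_finite M lborel
      by (simp add: pair_sigma_finite_def lborel.sigma_finite_measure_axioms M.sigma_finite_measure_axioms)
    have "(\<integral>\<^sup>+\<omega>. ennreal (\<bar>Q \<alpha> \<omega> - Q \<beta> \<omega>\<bar> powr p) \<partial>UI)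
        = (\<integral>\<^sup>+\<omega>. \<integral>\<^sup>+a. ennreal (wgt p a) * (ennreal (max 0 (Q \<alpha> \<omega> - Q \<beta> \<omega> - a)) + ennreal (max 0 (Q \<beta> \<omega> - Q \<alpha> \<omega> - a))) \<partial>lborel \<partial>UI)"
      by (intro nn_integral_cong DEC p1)
    also have "\<dots> = (\<integral>\<^sup>+a. \<integral>\<^sup>+\<omega>. ennreal (wgt p a) * (ennreal (max 0 (Q \<alpha> \<omega> - Q \<beta> \<omega> - a)) + ennreal (max 0 (Q \<beta> \<omega> - Q \<alpha> \<omega> - a))) \<partial>UI \<partial>lborel)"
      by (rule UL.Fubini'[symmetric]) measurable
    also have "\<dots> = (\<integral>\<^sup>+a. ennreal (wgt p a) * (\<integral>\<^sup>+\<omega>. ennreal (max 0 (Q \<alpha> \<omega> - Q \<beta> \<omega> - a)) + ennreal (max 0 (Q \<beta> \<omega> - Q \<alpha> \<omega> - a)) \<partial>UI) \<partial>lborel)"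
      by (intro nn_integral_cong nn_integral_cmult) measurable
    also have "\<dots> \<le> (\<integral>\<^sup>+a. ennreal (wgt p a) * (\<integral>\<^sup>+\<omega>. ennreal (max 0 (X \<omega> - Y \<omega> - a)) + ennreal (max 0 (Y \<omega> - X \<omega> - a)) \<partial>M) \<partial>lborel)"
      by (intro nn_integral_mono mult_left_mono KK) auto
    also have "\<dots> = (\<integral>\<^sup>+a. \<integral>\<^sup>+\<omega>. ennreal (wgt p a) * (ennreal (max 0 (X \<omega> - Y \<omega> - a)) + ennreal (max 0 (Y \<omega> - X \<omega> - a))) \<partial>M \<partial>lborel)"
      by (intro nn_integral_cong nn_integral_cmult[symmetric]) measurable
    also have "\<dots> = (\<integral>\<^sup>+\<omega>. \<integral>\<^sup>+a. ennreal (wgt p a) * (ennreal (max 0 (X \<omega> - Y \<omega> - a)) + ennreal (max 0 (Y \<omega> - X \<omega> - a))) \<partial>lborel \<partial>M)"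
      by (rule PM.Fubini') measurable
    also have "\<dots> = (\<integral>\<^sup>+\<omega>. ennreal (\<bar>X \<omega> - Y \<omega>\<bar> powr p) \<partial>M)"
      by (intro nn_integral_cong DEC[symmetric] p1)
    finally show ?thesis by (simp add: \<alpha>_def \<beta>_def)
  qed
qed


lemma powr_le_self:
  fixes t p :: real
  assumes "0 \<le> t" "t \<le> 1" "p \<ge> 1"
  shows "t powr p \<le> t"
  using powr_mono'[OF assms(3) assms(1,2)] assms(1) by simp

lemma CVX:
  fixes p u v t :: real
  assumes p: "p \<ge> 1" and uv: "u \<ge> 0" "v \<ge> 0" and t: "0 \<le> t" "t \<le> 1"
  shows "((1 - t) * u + t * v) powr p \<le> (1 - t) * u powr p + t * v powr p"
proof (cases "u = 0 \<or> v = 0")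
  case True
  then show ?thesis
  proof
    assume u: "u = 0"
    have "(t * v) powr p = t powr p * v powr p" by (simp add: powr_mult t uv)
    also have "\<dots> \<le> t * v powr p"
      by (intro mult_right_mono powr_le_self t p) simp
    finally show ?thesis using u p by simp
  next
    assume v: "v = 0"
    have "((1 - t) * u) powr p = (1 - t) powr p * u powr p" by (simp add: powr_mult t uv)
    also have "\<dots> \<le> (1 - t) * u powr p"
      by (intro mult_right_mono powr_le_self p) (use t in auto)
    finally show ?thesis using v p by simp
  qed
next
  case False
  then have "u > 0" "v > 0" using uv by auto
  then show ?thesis
    using convex_onD[OF powr_convex[OF p], of t u v] t by simp
qed

lemma PW:
  fixes p A B x y :: real
  assumes p: "p \<ge> 1" and A: "A > 0" and B: "B > 0"
  shows "\<bar>x + y\<bar> powr p \<le> (A + B) powr (p - 1) * (A powr (1 - p) * \<bar>x\<bar> powr p + B powr (1 - p) * \<bar>y\<bar> powr p)"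
proof -
  define t where "t = B / (A + B)"
  have t: "0 \<le> t" "t \<le> 1" "1 - t = A / (A + B)" using A B by (auto simp: t_def field_simps)
  have "\<bar>x\<bar> + \<bar>y\<bar> = (A + B) * ((1 - t) * (\<bar>x\<bar> / A) + t * (\<bar>y\<bar> / B))"
  proof -
    have 1: "(A / (A + B)) * (\<bar>x\<bar> / A) = \<bar>x\<bar> / (A + B)" using A B by (simp add: field_simps)
    have 2: "(B / (A + B)) * (\<bar>y\<bar> / B) = \<bar>y\<bar> / (A + B)" using A B by (simp add: field_simps)
    have "(A + B) * (\<bar>x\<bar> / (A + B) + \<bar>y\<bar> / (A + B)) = \<bar>x\<bar> + \<bar>y\<bar>"
      using A B by (simp add: add_divide_distrib[symmetric])
    then show ?thesis unfolding t(3) by (simp only: t_def mult.assoc[symmetric] 1 2)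
  qed
  then have "\<bar>x + y\<bar> powr p \<le> ((A + B) * ((1 - t) * (\<bar>x\<bar> / A) + t * (\<bar>y\<bar> / B))) powr p"
    using p by (metis abs_triangle_ineq abs_ge_zero le_less_trans less_le_not_le order.trans powr_mono2 zero_le_one)
  also have "\<dots> = (A + B) powr p * ((1 - t) * (\<bar>x\<bar> / A) + t * (\<bar>y\<bar> / B)) powr p"
    by (rule powr_mult)
  also have "\<dots> \<le> (A + B) powr p * ((1 - t) * (\<bar>x\<bar> / A) powr p + t * (\<bar>y\<bar> / B) powr p)"
    using A B t p by (intro mult_left_mono CVX) auto
  also have "\<dots> = (A + B) powr p * ((A / (A + B)) * (\<bar>x\<bar> powr p / A powr p) + (B / (A + B)) * (\<bar>y\<bar> powr p / B powr p))"
    by (simp only: t(3) powr_divide) (simp only: t_def)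
  also have "\<dots> = ((A + B) powr p / (A + B)) * ((A / A powr p) * \<bar>x\<bar> powr p + (B / B powr p) * \<bar>y\<bar> powr p)"
    by (simp add: divide_inverse algebra_simps)
  also have "\<dots> = (A + B) powr (p - 1) * (A powr (1 - p) * \<bar>x\<bar> powr p + B powr (1 - p) * \<bar>y\<bar> powr p)"
    using A B by (simp add: powr_diff)
  finally show ?thesis .
qed


lemma ennreal_lin:
  fixes a b u v :: real
  assumes "a \<ge> 0" "b \<ge> 0" "u \<ge> 0" "v \<ge> 0"
  shows "ennreal (a * u + b * v) = ennreal a * ennreal u + ennreal b * ennreal v"
  using assms by (subst ennreal_plus) (auto simp: ennreal_mult)

lemma enn_root_zero_case:
  fixes f g :: "'a \<Rightarrow> real"
  assumes [measurable]: "f \<in> borel_measurable M" "g \<in> borel_measurable M" and p: "p \<ge> 1"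
    and F0: "(\<integral>\<^sup>+x. ennreal (\<bar>f x\<bar> powr p) \<partial>M) = 0"
  shows "(\<integral>\<^sup>+x. ennreal (\<bar>f x + g x\<bar> powr p) \<partial>M) = (\<integral>\<^sup>+x. ennreal (\<bar>g x\<bar> powr p) \<partial>M)"
proof -
  have "AE x in M. ennreal (\<bar>f x\<bar> powr p) \<le> 0"
    using F0 by (subst (asm) nn_integral_0_iff_AE) auto
  then have "AE x in M. f x = 0"
    by eventually_elim (use p in auto)
  then show ?thesis
    by (intro nn_integral_cong_AE) auto
qed

lemma MINK:
  fixes f g :: "'a \<Rightarrow> real"
  assumes [measurable]: "f \<in> borel_measurable M" "g \<in> borel_measurable M" and p: "p \<ge> 1"
  shows "enn_root p (\<integral>\<^sup>+x. ennreal (\<bar>f x + g x\<bar> powr p) \<partial>M)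
    \<le> enn_root p (\<integral>\<^sup>+x. ennreal (\<bar>f x\<bar> powr p) \<partial>M) + enn_root p (\<integral>\<^sup>+x. ennreal (\<bar>g x\<bar> powr p) \<partial>M)"
proof -
  define IF where "IF = (\<integral>\<^sup>+x. ennreal (\<bar>f x\<bar> powr p) \<partial>M)"
  define IG where "IG = (\<integral>\<^sup>+x. ennreal (\<bar>g x\<bar> powr p) \<partial>M)"
  show ?thesis
  proof (cases "IF = \<infinity> \<or> IG = \<infinity>")
    case True
    then show ?thesis unfolding IF_def[symmetric] IG_def[symmetric]
      by (auto simp: enn_root_def)
  next
    case False
    then have fin: "IF \<noteq> \<infinity>" "IG \<noteq> \<infinity>" by auto
    define A where "A = enn2real IF powr (1/p)"
    define B where "B = enn2real IG powr (1/p)"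
    have A0: "A \<ge> 0" "B \<ge> 0" by (auto simp: A_def B_def)
    have IFA: "IF = ennreal (A powr p)"
      using fin p by (simp add: A_def powr_powr less_top[symmetric])
    have IGB: "IG = ennreal (B powr p)"
      using fin p by (simp add: B_def powr_powr less_top[symmetric])
    have rF: "enn_root p IF = ennreal A" using fin by (simp add: enn_root_def A_def)
    have rG: "enn_root p IG = ennreal B" using fin by (simp add: enn_root_def B_def)
    show ?thesis
    proof (cases "A = 0 \<or> B = 0")
      case True
      then show ?thesis
      proof
        assume "A = 0"
        then have "IF = 0" using IFA p by simp
        then have "(\<integral>\<^sup>+x. ennreal (\<bar>f x + g x\<bar> powr p) \<partial>M) = IG"
          unfolding IG_def IF_def by (intro enn_root_zero_case p) auto
        then show ?thesis unfolding IF_def[symmetric] IG_def[symmetric] by simp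
      next
        assume "B = 0"
        then have "IG = 0" using IGB p by simp
        then have "(\<integral>\<^sup>+x. ennreal (\<bar>g x + f x\<bar> powr p) \<partial>M) = IF"
          unfolding IG_def IF_def by (intro enn_root_zero_case p) auto
        then show ?thesis unfolding IF_def[symmetric] IG_def[symmetric] by (simp add: add.commute)
      qed
    next
      case False
      then have A: "A > 0" and B: "B > 0" using A0 by auto
      define c where "c = (A + B) powr (p - 1)"
      define a where "a = A powr (1 - p)"
      define b where "b = B powr (1 - p)"
      have abc: "a \<ge> 0" "b \<ge> 0" "c \<ge> 0" by (auto simp: a_def b_def c_def)
      have "(\<integral>\<^sup>+x. ennreal (\<bar>f x + g x\<bar> powr p) \<partial>M)
          \<le> (\<integral>\<^sup>+x. ennreal (c * (a * \<bar>f x\<bar> powr p + b * \<bar>g x\<bar> powr p)) \<partial>M)"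
        unfolding a_def b_def c_def by (intro nn_integral_mono ennreal_leI PW p A B)
      also have "\<dots> = (\<integral>\<^sup>+x. ennreal c * (ennreal a * ennreal (\<bar>f x\<bar> powr p) + ennreal b * ennreal (\<bar>g x\<bar> powr p)) \<partial>M)"
        using abc by (intro nn_integral_cong) (simp add: ennreal_mult ennreal_lin)
      also have "\<dots> = ennreal c * (ennreal a * IF + ennreal b * IG)"
        unfolding IF_def IG_def
        by (simp add: nn_integral_cmult nn_integral_add)
      also have "\<dots> = ennreal (c * (a * A powr p + b * B powr p))"
        using abc unfolding IFA IGB by (simp add: ennreal_mult ennreal_lin)
      also have "c * (a * A powr p + b * B powr p) = (A + B) powr p"
      proof -
        have "a * A powr p = A" using A by (simp add: a_def powr_add[symmetric])
        moreover have "b * B powr p = B" using B by (simp add: b_def powr_add[symmetric])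
        moreover have "c * (A + B) = (A + B) powr p"
          using A B powr_add[of "A + B" "p - 1" 1] by (simp add: c_def)
        ultimately show ?thesis by simp
      qed
      finally have "(\<integral>\<^sup>+x. ennreal (\<bar>f x + g x\<bar> powr p) \<partial>M) \<le> ennreal ((A + B) powr p)" .
      then have "enn_root p (\<integral>\<^sup>+x. ennreal (\<bar>f x + g x\<bar> powr p) \<partial>M) \<le> enn_root p (ennreal ((A + B) powr p))"
        using p by (intro enn_root_mono) auto
      also have "\<dots> = ennreal A + ennreal B"
        using A B p by (subst enn_root_powr) (auto simp: ennreal_plus)
      finally show ?thesis unfolding IF_def[symmetric] IG_def[symmetric] rF rG .
    qed
  qed
qed


lemma SP:
  fixes \<alpha> \<beta> :: "real measure" and g :: "real \<Rightarrow> ennreal"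
  assumes ra: "real_distribution \<alpha>" and rb: "real_distribution \<beta>"
    and g: "g \<in> borel_measurable borel" "\<beta> = density lborel g" "\<And>x. g x \<le> ennreal C"
    and eps: "\<epsilon> > 0" and p: "p \<ge> 1"
    and I: "(\<integral>\<^sup>+\<omega>. ennreal (\<bar>Q \<alpha> \<omega> - Q \<beta> \<omega>\<bar> powr p) \<partial>UI) \<le> ennreal (\<epsilon> powr p)"
  shows "cdf \<alpha> z - cdf \<beta> z \<le> 2 * sqrt (C * \<epsilon>)"
proof -
  interpret A: real_distribution \<alpha> by (rule ra)
  interpret B: real_distribution \<beta> by (rule rb)
  interpret U: prob_space UI by (rule prob_UI)
  have [measurable]: "Q \<alpha> \<in> borel_measurable UI" "Q \<beta> \<in> borel_measurable UI"
    using ra rb by (auto intro: Q_meas)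
  have Cpos: "C > 0"
  proof (rule ccontr)
    assume "\<not> C > 0"
    then have "g x = 0" for x using g(3)[of x] by (metis ennreal_eq_0_iff le_zero_eq not_less)
    then have "emeasure \<beta> UNIV = 0" using g(1) by (simp add: g(2) emeasure_density)
    moreover have "emeasure \<beta> UNIV = 1" using B.emeasure_space_1 by simp
    ultimately show False by simp
  qed
  define F where "F = cdf \<alpha> z"
  define G where "G = cdf \<beta> z"
  define \<delta> where "\<delta> = F - G"
  show ?thesis
  proof (rule ccontr)
    assume "\<not> ?thesis"
    then have big: "2 * sqrt (C * \<epsilon>) < \<delta>" by (simp add: \<delta>_def F_def G_def)
    have sq0: "0 \<le> sqrt (C * \<epsilon>)" using Cpos eps by simp
    then have dpos: "\<delta> > 0" using big by linarith
    have F1: "F \<le> 1" "G \<ge> 0" unfolding F_def G_def by (auto intro: A.cdf_bounded_prob B.cdf_nonneg)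
    have d1: "\<delta> \<le> 1" using F1 by (simp add: \<delta>_def)
    define t where "t = \<delta> / (2 * C)"
    have tpos: "t > 0" using dpos Cpos by (simp add: t_def)
    have Gt: "cdf \<beta> (z + t) \<le> G + C * t"
    proof -
      have "emeasure \<beta> {z<..z+t} = (\<integral>\<^sup>+x. g x * indicator {z<..z+t} x \<partial>lborel)"
        using g(1) by (simp add: g(2) emeasure_density)
      also have "\<dots> \<le> (\<integral>\<^sup>+x. ennreal C * indicator {z<..z+t} x \<partial>lborel)"
        by (intro nn_integral_mono mult_right_mono g(3)) auto
      also have "\<dots> = ennreal (C * t)"
        using tpos Cpos by (simp add: nn_integral_cmult ennreal_mult)
      finally have "measure \<beta> {z<..z+t} \<le> C * t"
        using Cpos tpos by (simp add: B.emeasure_eq_measure ennreal_le_iff)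
      then show ?thesis using B.cdf_diff_eq[of z "z + t"] tpos by (simp add: G_def)
    qed
    define S where "S = {G + \<delta>/2 <..< F}"
    have S01: "S \<subseteq> {0<..<1}" using F1 dpos by (auto simp: S_def)
    have pt: "t powr p \<le> \<bar>Q \<alpha> \<omega> - Q \<beta> \<omega>\<bar> powr p" if "\<omega> \<in> S" for \<omega>
    proof -
      have w: "0 < \<omega>" "\<omega> < 1" using S01 that by auto
      have "\<omega> \<le> F" using that by (simp add: S_def)
      then have qa: "Q \<alpha> \<omega> \<le> z" using Q_pseudo[OF ra w] by (simp add: F_def)
      have "\<not> Q \<beta> \<omega> \<le> z + t"
      proof
        assume "Q \<beta> \<omega> \<le> z + t"
        then have "\<omega> \<le> cdf \<beta> (z + t)" using Q_pseudo[OF rb w] by simp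
        moreover have "C * t = \<delta> / 2" using Cpos by (simp add: t_def)
        ultimately show False using Gt that by (simp add: S_def)
      qed
      then have "t \<le> \<bar>Q \<alpha> \<omega> - Q \<beta> \<omega>\<bar>" using qa by simp
      then show ?thesis using tpos p by (intro powr_mono2) auto
    qed
    have "(\<integral>\<^sup>+\<omega>. ennreal (t powr p) * indicator S \<omega> \<partial>UI) \<le> (\<integral>\<^sup>+\<omega>. ennreal (\<bar>Q \<alpha> \<omega> - Q \<beta> \<omega>\<bar> powr p) \<partial>UI)"
      using pt by (intro nn_integral_mono) (auto simp: indicator_def intro!: ennreal_leI)
    moreover have "(\<integral>\<^sup>+\<omega>. ennreal (t powr p) * indicator S \<omega> \<partial>UI) = ennreal (t powr p) * emeasure UI S"
      using S01 by (subst nn_integral_cmult_indicator) (auto simp: S_def sets_restrict_space_iff)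
    moreover have "emeasure UI S = ennreal (\<delta> / 2)"
    proof -
      have "emeasure UI S = emeasure lborel S"
        using S01 by (subst emeasure_restrict_space) (auto simp: S_def)
      also have "\<dots> = ennreal (F - (G + \<delta>/2))"
        unfolding S_def using dpos by (intro emeasure_lborel_Ioo) (simp add: \<delta>_def field_simps)
      also have "F - (G + \<delta>/2) = \<delta>/2" by (simp add: \<delta>_def field_simps)
      finally show ?thesis .
    qed
    ultimately have "ennreal (t powr p) * ennreal (\<delta> / 2) \<le> ennreal (\<epsilon> powr p)"
      using I by (metis order.trans)
    then have "ennreal (t powr p * (\<delta> / 2)) \<le> ennreal (\<epsilon> powr p)"
      using tpos dpos by (subst ennreal_mult) auto
    then have le: "t powr p * (\<delta> / 2) \<le> \<epsilon> powr p"
      by (subst (asm) ennreal_le_iff) auto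
    have "4 * (C * \<epsilon>) < \<delta>^2"
    proof -
      have "(2 * sqrt (C * \<epsilon>))^2 < \<delta>^2" using big sq0 by (intro power_strict_mono) auto
      then show ?thesis using Cpos eps by (simp add: power_mult_distrib)
    qed
    then have "\<epsilon> < t * (\<delta> / 2)" using Cpos by (simp add: t_def field_simps power2_eq_square)
    then have "\<epsilon> powr p < (t * (\<delta> / 2)) powr p" using eps p by (intro powr_less_mono2) auto
    also have "\<dots> = t powr p * (\<delta> / 2) powr p" by (rule powr_mult)
    also have "\<dots> \<le> t powr p * (\<delta> / 2)" using dpos d1 p by (intro mult_left_mono powr_le_self) auto
    finally show False using le by simp
  qed
qed


lemma fst_borel [measurable]: "(fst :: real \<times> real \<Rightarrow> real) \<in> borel_measurable borel"
  by (rule borel_measurable_continuous_onI) (rule continuous_on_fst[OF continuous_on_id])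

lemma snd_borel [measurable]: "(snd :: real \<times> real \<Rightarrow> real) \<in> borel_measurable borel"
  by (rule borel_measurable_continuous_onI) (rule continuous_on_snd[OF continuous_on_id])

lemma QCOUP:
  assumes ra: "real_distribution \<alpha>" and rb: "real_distribution \<beta>"
  shows "wasserstein p \<alpha> \<beta> \<le> enn_root p (\<integral>\<^sup>+\<omega>. ennreal (\<bar>Q \<alpha> \<omega> - Q \<beta> \<omega>\<bar> powr p) \<partial>UI)"
proof -
  have [measurable]: "Q \<alpha> \<in> borel_measurable UI" "Q \<beta> \<in> borel_measurable UI"
    using ra rb by (auto intro: Q_meas)
  define \<phi> where "\<phi> = (\<lambda>\<omega>. (Q \<alpha> \<omega>, Q \<beta> \<omega>))"
  have meas: "\<phi> \<in> measurable UI (borel :: (real \<times> real) measure)"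
    unfolding \<phi>_def by measurable
  define \<pi> where "\<pi> = distr UI borel \<phi>"
  have "\<pi> \<in> couplings \<alpha> \<beta>"
    unfolding couplings_def
  proof (intro CollectI conjI)
    show "prob_space \<pi>" unfolding \<pi>_def by (rule prob_space.prob_space_distr[OF prob_UI meas])
    show "sets \<pi> = sets (borel :: (real \<times> real) measure)" by (simp add: \<pi>_def)
    show "distr \<pi> borel fst = \<alpha>"
      unfolding \<pi>_def using meas
      by (subst distr_distr) (auto simp: comp_def \<phi>_def Q_distr[OF ra])
    show "distr \<pi> borel snd = \<beta>"
      unfolding \<pi>_def using meas
      by (subst distr_distr) (auto simp: comp_def \<phi>_def Q_distr[OF rb])
  qed
  then have "wasserstein p \<alpha> \<beta> \<le> enn_root p (\<integral>\<^sup>+ z. ennreal (\<bar>fst z - snd z\<bar> powr p) \<partial>\<pi>)"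
    unfolding wasserstein_def by (rule INF_lower)
  also have "(\<integral>\<^sup>+ z. ennreal (\<bar>fst z - snd z\<bar> powr p) \<partial>\<pi>) = (\<integral>\<^sup>+\<omega>. ennreal (\<bar>Q \<alpha> \<omega> - Q \<beta> \<omega>\<bar> powr p) \<partial>UI)"
    unfolding \<pi>_def using meas by (subst nn_integral_distr) (auto simp: \<phi>_def)
  finally show ?thesis .
qed


lemma STEPD:
  assumes ra: "real_distribution \<alpha>" and rb: "real_distribution \<beta>" and p: "p \<ge> 1"
  shows "enn_root p (\<integral>\<^sup>+\<omega>. ennreal (\<bar>Q \<alpha> \<omega> - Q \<beta> \<omega>\<bar> powr p) \<partial>UI) \<le> wasserstein p \<alpha> \<beta>"
  unfolding wasserstein_def
proof (rule INF_greatest)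
  fix \<pi> assume "\<pi> \<in> couplings \<alpha> \<beta>"
  then have c: "prob_space \<pi>" "sets \<pi> = sets (borel :: (real \<times> real) measure)"
    "distr \<pi> borel fst = \<alpha>" "distr \<pi> borel snd = \<beta>"
    by (auto simp: couplings_def)
  have [measurable]: "fst \<in> borel_measurable \<pi>"
    by (subst measurable_cong_sets[OF c(2) refl]) simp
  have [measurable]: "snd \<in> borel_measurable \<pi>"
    by (subst measurable_cong_sets[OF c(2) refl]) simp
  have "(\<integral>\<^sup>+\<omega>. ennreal (\<bar>Q \<alpha> \<omega> - Q \<beta> \<omega>\<bar> powr p) \<partial>UI) \<le> (\<integral>\<^sup>+z. ennreal (\<bar>fst z - snd z\<bar> powr p) \<partial>\<pi>)"
    using CORE[OF c(1), of fst snd p] p by (simp add: c(3,4))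
  then show "enn_root p (\<integral>\<^sup>+\<omega>. ennreal (\<bar>Q \<alpha> \<omega> - Q \<beta> \<omega>\<bar> powr p) \<partial>UI)
      \<le> enn_root p (\<integral>\<^sup>+z. ennreal (\<bar>fst z - snd z\<bar> powr p) \<partial>\<pi>)"
    using p by (intro enn_root_mono) auto
qed

lemma STEPC:
  fixes \<nu> :: "'d::finite outcome measure" and u v :: "real^'d \<Rightarrow> real"
  assumes \<nu>: "prob_space \<nu>" and [measurable]: "fst \<in> measurable \<nu> borel" "(\<lambda>\<omega>. snd (snd \<omega>)) \<in> borel_measurable \<nu>"
    and [measurable]: "u \<in> borel_measurable borel" "v \<in> borel_measurable borel" and p: "p \<ge> 1"
  shows "enn_root p (\<integral>\<^sup>+\<omega>. ennreal (\<bar>Q (push \<nu> u) \<omega> - Q (push \<nu> v) \<omega>\<bar> powr p) \<partial>UI)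
    \<le> lp_error p \<nu> u + lp_error p \<nu> v"
proof -
  have "enn_root p (\<integral>\<^sup>+\<omega>. ennreal (\<bar>Q (push \<nu> u) \<omega> - Q (push \<nu> v) \<omega>\<bar> powr p) \<partial>UI)
      \<le> enn_root p (\<integral>\<^sup>+\<omega>. ennreal (\<bar>u (fst \<omega>) - v (fst \<omega>)\<bar> powr p) \<partial>\<nu>)"
    using p unfolding push_def by (intro enn_root_mono CORE[OF \<nu>]) auto
  also have "(\<integral>\<^sup>+\<omega>. ennreal (\<bar>u (fst \<omega>) - v (fst \<omega>)\<bar> powr p) \<partial>\<nu>)
      = (\<integral>\<^sup>+\<omega>. ennreal (\<bar>(u (fst \<omega>) - snd (snd \<omega>)) + (snd (snd \<omega>) - v (fst \<omega>))\<bar> powr p) \<partial>\<nu>)"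
    by simp
  also have "enn_root p \<dots> \<le> enn_root p (\<integral>\<^sup>+\<omega>. ennreal (\<bar>u (fst \<omega>) - snd (snd \<omega>)\<bar> powr p) \<partial>\<nu>)
      + enn_root p (\<integral>\<^sup>+\<omega>. ennreal (\<bar>snd (snd \<omega>) - v (fst \<omega>)\<bar> powr p) \<partial>\<nu>)"
    using p by (intro MINK) auto
  also have "\<dots> = lp_error p \<nu> u + lp_error p \<nu> v"
    unfolding lp_error_def by (simp add: abs_minus_commute)
  finally show ?thesis .
qed

lemma ROOTLE:
  assumes p: "p \<ge> 1" and e: "\<epsilon> > 0" and le: "enn_root p I \<le> ennreal \<epsilon>"
  shows "I \<le> ennreal (\<epsilon> powr p)"
proof (cases I rule: ennreal_cases)
  case (real r)
  then have "r powr (1/p) \<le> \<epsilon>" using le e by (simp add: enn_root_def ennreal_le_iff)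
  then have "(r powr (1/p)) powr p \<le> \<epsilon> powr p" using p by (intro powr_mono2) auto
  then have "r \<le> \<epsilon> powr p" using p real by (simp add: powr_powr)
  then show ?thesis using real by (simp add: ennreal_leI)
next
  case top
  then show ?thesis using le by (simp add: enn_root_def top_unique)
qed

lemma ARITH:
  fixes W e0 e1 o0 o1 :: ennreal and \<epsilon> :: real
  assumes W: "W \<le> (o0 + e0) + ennreal \<epsilon> + (e1 + o1)" and o: "o0 \<le> 1" "o1 \<le> 1" and e: "\<epsilon> > 0"
  shows "(enn2ereal e0 - enn2ereal o0) + (enn2ereal e1 - enn2ereal o1)
     \<ge> enn2ereal W - 2 * (enn2ereal o0 + enn2ereal o1) - ereal \<epsilon>"
proof -
  obtain a0 where a0: "o0 = ennreal a0" "a0 \<ge> 0"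
    using o(1) by (cases o0 rule: ennreal_cases) (auto simp: top_unique)
  obtain a1 where a1: "o1 = ennreal a1" "a1 \<ge> 0"
    using o(2) by (cases o1 rule: ennreal_cases) (auto simp: top_unique)
  have ea0: "enn2ereal o0 = ereal a0" and ea1: "enn2ereal o1 = ereal a1"
    using a0 a1 by (simp_all add: enn2ereal_ennreal)
  show ?thesis
  proof (cases "e0 = \<infinity> \<or> e1 = \<infinity>")
    case True
    have fin0: "enn2ereal e0 - ereal a0 \<noteq> -\<infinity>" using enn2ereal_nonneg[of e0] by (cases "enn2ereal e0") auto
    have fin1: "enn2ereal e1 - ereal a1 \<noteq> -\<infinity>" using enn2ereal_nonneg[of e1] by (cases "enn2ereal e1") auto
    have h: "(enn2ereal e0 - ereal a0) + (enn2ereal e1 - ereal a1) = \<infinity>"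
    proof (cases "e0 = \<infinity>")
      case True
      then have "enn2ereal e0 - ereal a0 = \<infinity>" by simp
      then show ?thesis using fin1 by simp
    next
      case False
      then have "e1 = \<infinity>" using \<open>e0 = \<infinity> \<or> e1 = \<infinity>\<close> by simp
      then have "enn2ereal e1 - ereal a1 = \<infinity>" by simp
      then show ?thesis using fin0 by simp
    qed
    show ?thesis unfolding ea0 ea1 h by simp
  next
    case False
    then obtain b0 b1 where b: "e0 = ennreal b0" "b0 \<ge> 0" "e1 = ennreal b1" "b1 \<ge> 0"
    proof -
      obtain b0 where "e0 = ennreal b0" "b0 \<ge> 0" using False by (cases e0 rule: ennreal_cases) auto
      moreover obtain b1 where "e1 = ennreal b1" "b1 \<ge> 0" using False by (cases e1 rule: ennreal_cases) auto
      ultimately show ?thesis using that by blast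
    qed
    have "(o0 + e0) + ennreal \<epsilon> + (e1 + o1) = ennreal (a0 + b0 + \<epsilon> + (b1 + a1))"
      unfolding a0 b a1 using a0 a1 b e by (simp add: ennreal_plus)
    then have "W \<le> ennreal (a0 + b0 + \<epsilon> + (b1 + a1))" using W by simp
    moreover obtain w where w0: "W = ennreal w" "w \<ge> 0"
      using calculation by (cases W rule: ennreal_cases) (auto simp: top_unique)
    ultimately have "ennreal w \<le> ennreal (a0 + b0 + \<epsilon> + (b1 + a1))"
      by (simp only:)
    then have "w \<le> a0 + b0 + \<epsilon> + (b1 + a1)"
      using a0 a1 b e by (subst (asm) ennreal_le_iff) auto
    then have w: "W = ennreal w" "w \<ge> 0" "w \<le> a0 + b0 + \<epsilon> + (b1 + a1)" using w0 by auto
    have ew: "enn2ereal W = ereal w" and eb: "enn2ereal e0 = ereal b0" "enn2ereal e1 = ereal b1"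
      using w b by (simp_all add: enn2ereal_ennreal)
    have "ereal w - 2 * (ereal a0 + ereal a1) - ereal \<epsilon> = ereal (w - 2 * (a0 + a1) - \<epsilon>)" by simp
    moreover have "(ereal b0 - ereal a0) + (ereal b1 - ereal a1) = ereal ((b0 - a0) + (b1 - a1))" by simp
    moreover have "w - 2 * (a0 + a1) - \<epsilon> \<le> (b0 - a0) + (b1 - a1)" using w(3) by (simp add: algebra_simps)
    ultimately show ?thesis unfolding ew eb ea0 ea1 by simp
  qed
qed

theorem proposition2:
  fixes \<mu> :: "'d::finite outcome measure"
    and p \<epsilon> :: real
    and f0 f1 h :: "real^'d \<Rightarrow> real"
  assumes "prob_space \<mu>"
    and "sets \<mu> = sets sample_space"
    and "measure \<mu> {\<omega> \<in> space \<mu>. fst (snd \<omega>) = False} > 0"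
    and "measure \<mu> {\<omega> \<in> space \<mu>. fst (snd \<omega>) = True} > 0"
    and "AE \<omega> in \<mu>. \<bar>snd (snd \<omega>)\<bar> \<le> 1"
    and "p \<ge> 1"
    and "f0 \<in> borel_measurable borel"
    and "lp_error p (cond_dist \<mu> False) f0 = opt_lp_error p (cond_dist \<mu> False)"
    and "f1 \<in> borel_measurable borel"
    and "lp_error p (cond_dist \<mu> True) f1 = opt_lp_error p (cond_dist \<mu> True)"
    and "h \<in> borel_measurable borel"
    and "\<epsilon> > 0"
    and "wasserstein p (push (cond_dist \<mu> False) h) (push (cond_dist \<mu> True) h) \<le> ennreal \<epsilon>"
  shows "(excess_risk p (cond_dist \<mu> False) h + excess_risk p (cond_dist \<mu> True) h
           \<ge> enn2ereal (wasserstein p (push (cond_dist \<mu> False) f0) (push (cond_dist \<mu> True) f1))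
             - 2 * (enn2ereal (opt_lp_error p (cond_dist \<mu> False))
                    + enn2ereal (opt_lp_error p (cond_dist \<mu> True)))
             - ereal \<epsilon>)
    \<and> (\<forall>C::real. (\<forall>a. \<exists>g. g \<in> borel_measurable borel
                       \<and> push (cond_dist \<mu> a) h = density lborel g
                       \<and> (\<forall>z. g z \<le> ennreal C))
         \<longrightarrow> (\<forall>z. \<bar>measure (cond_dist \<mu> False) {\<omega> \<in> space \<mu>. h (fst \<omega>) \<le> z}
                  - measure (cond_dist \<mu> True) {\<omega> \<in> space \<mu>. h (fst \<omega>) \<le> z}\<bar>
                 \<le> 2 * sqrt (C * \<epsilon>)))"
proof -
  note p = assms(6)
  interpret \<mu>: prob_space \<mu> by (rule assms(1))
  have sp: "sets \<mu> = sets (borel \<Otimes>\<^sub>M count_space UNIV \<Otimes>\<^sub>M (borel :: real measure) :: 'd outcome measure)"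
    using assms(2) by (simp add: sample_space_def)
  have mX: "fst \<in> measurable \<mu> (borel :: (real^'d) measure)"
    by (subst measurable_cong_sets[OF sp refl]) measurable
  have mA: "(\<lambda>\<omega>. fst (snd \<omega>)) \<in> measurable \<mu> (count_space UNIV :: bool measure)"
    by (subst measurable_cong_sets[OF sp refl]) measurable
  have mY: "(\<lambda>\<omega>. snd (snd \<omega>)) \<in> borel_measurable \<mu>"
    by (subst measurable_cong_sets[OF sp refl]) measurable
  have Sset: "{\<omega> \<in> space \<mu>. fst (snd \<omega>) = a} \<in> sets \<mu>" for a
  proof -
    have "{\<omega> \<in> space \<mu>. fst (snd \<omega>) = a} = (\<lambda>\<omega>. fst (snd \<omega>)) -` {a} \<inter> space \<mu>" by auto
    then show ?thesis using measurable_sets[OF mA, of "{a}"] by simp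
  qed
  have pos: "emeasure \<mu> {\<omega> \<in> space \<mu>. fst (snd \<omega>) = a} \<noteq> 0" for a
    using assms(3,4) by (cases a) (auto simp: \<mu>.emeasure_eq_measure)
  have cdp: "prob_space (cond_dist \<mu> a)" for a
    unfolding cond_dist_def using pos by (intro prob_space_uniform_measure) auto
  have cds[simp]: "sets (cond_dist \<mu> a) = sets \<mu>" "space (cond_dist \<mu> a) = space \<mu>" for a
    by (simp_all add: cond_dist_def)
  have mXc: "fst \<in> measurable (cond_dist \<mu> a) (borel :: (real^'d) measure)" for a
    by (subst measurable_cong_sets[OF cds(1) refl]) (rule mX)
  have mYc: "(\<lambda>\<omega>. snd (snd \<omega>)) \<in> borel_measurable (cond_dist \<mu> a)" for a
    by (subst measurable_cong_sets[OF cds(1) refl]) (rule mY)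
  have opt1: "opt_lp_error p (cond_dist \<mu> a) \<le> 1" for a
  proof -
    have "AE \<omega> in \<mu>. \<omega> \<in> {\<omega> \<in> space \<mu>. fst (snd \<omega>) = a} \<longrightarrow> \<bar>snd (snd \<omega>)\<bar> \<le> 1"
      using assms(5) by eventually_elim auto
    then have AEc: "AE \<omega> in cond_dist \<mu> a. \<bar>snd (snd \<omega>)\<bar> \<le> 1"
      unfolding cond_dist_def using pos by (subst AE_uniform_measure) (auto simp: less_top[symmetric] \<mu>.emeasure_finite)
    have "opt_lp_error p (cond_dist \<mu> a) \<le> lp_error p (cond_dist \<mu> a) (\<lambda>_. 0)"
      unfolding opt_lp_error_def by (rule INF_lower) simp
    also have "\<dots> \<le> enn_root p 1"
      unfolding lp_error_def
    proof (rule enn_root_mono)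
      show "p > 0" using p by simp
      have "(\<integral>\<^sup>+\<omega>. ennreal (\<bar>0 - snd (snd \<omega>)\<bar> powr p) \<partial>cond_dist \<mu> a) \<le> (\<integral>\<^sup>+\<omega>. 1 \<partial>cond_dist \<mu> a)"
        using AEc
      proof (intro nn_integral_mono_AE, eventually_elim)
        case (elim \<omega>)
        then have "\<bar>snd (snd \<omega>)\<bar> powr p \<le> 1" using p by (intro powr_le1) auto
        then show ?case by simp
      qed
      also have "\<dots> = 1" using prob_space.emeasure_space_1[OF cdp] by simp
      finally show "(\<integral>\<^sup>+\<omega>. ennreal (\<bar>0 - snd (snd \<omega>)\<bar> powr p) \<partial>cond_dist \<mu> a) \<le> 1" .
    qed
    also have "enn_root p 1 = 1" by (simp add: enn_root_def)
    finally show ?thesis .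
  qed
  have rd: "real_distribution (push (cond_dist \<mu> a) g)" if "g \<in> borel_measurable borel" for a g
    unfolding push_def using measurable_compose[OF mXc that] by (intro real_distribution_distr cdp)
  have rdF0: "real_distribution (push (cond_dist \<mu> False) f0)" by (rule rd[OF assms(7)])
  have rdF1: "real_distribution (push (cond_dist \<mu> True) f1)" by (rule rd[OF assms(9)])
  have rdH0: "real_distribution (push (cond_dist \<mu> False) h)" by (rule rd[OF assms(11)])
  have rdH1: "real_distribution (push (cond_dist \<mu> True) h)" by (rule rd[OF assms(11)])
  define F0 where "F0 = push (cond_dist \<mu> False) f0"
  define F1 where "F1 = push (cond_dist \<mu> True) f1"
  define H0 where "H0 = push (cond_dist \<mu> False) h"
  define H1 where "H1 = push (cond_dist \<mu> True) h"
  define R where "R \<alpha> \<beta> = enn_root p (\<integral>\<^sup>+\<omega>. ennreal (\<bar>Q \<alpha> \<omega> - Q \<beta> \<omega>\<bar> powr p) \<partial>UI)" for \<alpha> \<beta>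
  have [measurable]: "Q F0 \<in> borel_measurable UI" "Q F1 \<in> borel_measurable UI"
    "Q H0 \<in> borel_measurable UI" "Q H1 \<in> borel_measurable UI"
    using rdF0 rdF1 rdH0 rdH1 by (auto simp: F0_def F1_def H0_def H1_def intro: Q_meas)
  have c0: "R F0 H0 \<le> lp_error p (cond_dist \<mu> False) f0 + lp_error p (cond_dist \<mu> False) h"
    unfolding R_def F0_def H0_def by (rule STEPC[OF cdp mXc mYc assms(7) assms(11) p])
  have c1: "R H1 F1 \<le> lp_error p (cond_dist \<mu> True) h + lp_error p (cond_dist \<mu> True) f1"
    unfolding R_def F1_def H1_def by (rule STEPC[OF cdp mXc mYc assms(11) assms(9) p])
  have d: "R H0 H1 \<le> ennreal \<epsilon>"
    using STEPD[OF rdH0 rdH1 p] assms(13) unfolding R_def H0_def H1_def by (rule order.trans)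
  have tri: "R F0 F1 \<le> R F0 H0 + (R H0 H1 + R H1 F1)"
  proof -
    have "R F0 F1 = enn_root p (\<integral>\<^sup>+\<omega>. ennreal (\<bar>(Q F0 \<omega> - Q H0 \<omega>) + ((Q H0 \<omega> - Q H1 \<omega>) + (Q H1 \<omega> - Q F1 \<omega>))\<bar> powr p) \<partial>UI)"
      unfolding R_def by simp
    also have "\<dots> \<le> R F0 H0 + enn_root p (\<integral>\<^sup>+\<omega>. ennreal (\<bar>(Q H0 \<omega> - Q H1 \<omega>) + (Q H1 \<omega> - Q F1 \<omega>)\<bar> powr p) \<partial>UI)"
      unfolding R_def using p by (intro MINK) auto
    also have "enn_root p (\<integral>\<^sup>+\<omega>. ennreal (\<bar>(Q H0 \<omega> - Q H1 \<omega>) + (Q H1 \<omega> - Q F1 \<omega>)\<bar> powr p) \<partial>UI) \<le> R H0 H1 + R H1 F1"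
      unfolding R_def using p by (intro MINK) auto
    finally show ?thesis by (simp add: add_left_mono)
  qed
  have W: "wasserstein p F0 F1 \<le> R F0 F1"
    unfolding R_def by (rule QCOUP[OF rdF0[folded F0_def] rdF1[folded F1_def]])
  have Wb: "wasserstein p F0 F1 \<le> (opt_lp_error p (cond_dist \<mu> False) + lp_error p (cond_dist \<mu> False) h)
      + ennreal \<epsilon> + (lp_error p (cond_dist \<mu> True) h + opt_lp_error p (cond_dist \<mu> True))"
  proof -
    have "wasserstein p F0 F1 \<le> R F0 H0 + (R H0 H1 + R H1 F1)" using W tri by (rule order.trans)
    also have "\<dots> \<le> (lp_error p (cond_dist \<mu> False) f0 + lp_error p (cond_dist \<mu> False) h)
      + (ennreal \<epsilon> + (lp_error p (cond_dist \<mu> True) h + lp_error p (cond_dist \<mu> True) f1))"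
      using c0 c1 d by (intro add_mono) auto
    finally show ?thesis using assms(8,10) by (simp add: add.assoc)
  qed
  have part1: "excess_risk p (cond_dist \<mu> False) h + excess_risk p (cond_dist \<mu> True) h
           \<ge> enn2ereal (wasserstein p (push (cond_dist \<mu> False) f0) (push (cond_dist \<mu> True) f1))
             - 2 * (enn2ereal (opt_lp_error p (cond_dist \<mu> False))
                    + enn2ereal (opt_lp_error p (cond_dist \<mu> True)))
             - ereal \<epsilon>"
    unfolding excess_risk_def F0_def[symmetric] F1_def[symmetric]
    by (rule ARITH[OF Wb opt1 opt1 assms(12)])
  have I01: "(\<integral>\<^sup>+\<omega>. ennreal (\<bar>Q H0 \<omega> - Q H1 \<omega>\<bar> powr p) \<partial>UI) \<le> ennreal (\<epsilon> powr p)"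
    using ROOTLE[OF p assms(12)] d unfolding R_def by blast
  have I10: "(\<integral>\<^sup>+\<omega>. ennreal (\<bar>Q H1 \<omega> - Q H0 \<omega>\<bar> powr p) \<partial>UI) \<le> ennreal (\<epsilon> powr p)"
    using I01 by (simp add: abs_minus_commute)
  have cdfeq: "measure (cond_dist \<mu> a) {\<omega> \<in> space \<mu>. h (fst \<omega>) \<le> z} = cdf (push (cond_dist \<mu> a) h) z" for a z
    using cdf_distr_eq[OF cdp measurable_compose[OF mXc assms(11)], of a z] by (simp add: push_def)
  have part2: "\<forall>C::real. (\<forall>a. \<exists>g. g \<in> borel_measurable borel
                       \<and> push (cond_dist \<mu> a) h = density lborel g
                       \<and> (\<forall>z. g z \<le> ennreal C))
         \<longrightarrow> (\<forall>z. \<bar>measure (cond_dist \<mu> False) {\<omega> \<in> space \<mu>. h (fst \<omega>) \<le> z}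
                  - measure (cond_dist \<mu> True) {\<omega> \<in> space \<mu>. h (fst \<omega>) \<le> z}\<bar>
                 \<le> 2 * sqrt (C * \<epsilon>))"
  proof (intro allI impI)
    fix C :: real and z :: real
    assume dens: "\<forall>a. \<exists>g. g \<in> borel_measurable borel \<and> push (cond_dist \<mu> a) h = density lborel g \<and> (\<forall>z. g z \<le> ennreal C)"
    obtain g0 where g0: "g0 \<in> borel_measurable borel" "H0 = density lborel g0" "\<And>z. g0 z \<le> ennreal C"
      using dens[rule_format, of False] unfolding H0_def by blast
    obtain g1 where g1: "g1 \<in> borel_measurable borel" "H1 = density lborel g1" "\<And>z. g1 z \<le> ennreal C"
      using dens[rule_format, of True] unfolding H1_def by blast
    have "cdf H0 z - cdf H1 z \<le> 2 * sqrt (C * \<epsilon>)"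
      by (rule SP[OF rdH0[folded H0_def] rdH1[folded H1_def] g1 assms(12) p I01])
    moreover have "cdf H1 z - cdf H0 z \<le> 2 * sqrt (C * \<epsilon>)"
      by (rule SP[OF rdH1[folded H1_def] rdH0[folded H0_def] g0 assms(12) p I10])
    ultimately show "\<bar>measure (cond_dist \<mu> False) {\<omega> \<in> space \<mu>. h (fst \<omega>) \<le> z}
                  - measure (cond_dist \<mu> True) {\<omega> \<in> space \<mu>. h (fst \<omega>) \<le> z}\<bar>
                 \<le> 2 * sqrt (C * \<epsilon>)"
      unfolding cdfeq H0_def H1_def by linarith
  qed
  show ?thesis using part1 part2 by blast
qed

end
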